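(* For $x\in(0,1)$, the functions $f(k)=\sin\left(\frac{\pi}{2}x^k\right)^{1/k}$, $g(k)=\tan\left(\frac{\pi}{2}x^k\right)^{1/k}$ and $h(k)=\sinh(x^k)^{1/k}$ are decreasing on $(0,\infty)$. In particular, for $k\ge1$, $$\sqrt[k]{\sin\left(\tfrac{\pi}{2}x^k\right)}\le\sin\left(\tfrac{\pi}{2}x\right)\le\sin\left(\tfrac{\pi}{2}\sqrt[k]{x}\right)^k,\qquad \sqrt[k]{\tan\left(\tfrac{\pi}{2}x^k\right)}\le\tan\left(\tfrac{\pi}{2}x\right)\le\tan\left(\tfrac{\pi}{2}\sqrt[k]{x}\right)^k,$$ $$\sqrt[k]{\sinh(x^k)}\le\sinh(x)\le\sinh(\sqrt[k]{x})^k.$$ *)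

theory Defs
  imports "HOL-Analysis.Analysis"
begin

end

theory Submission
  imports Defs
begin


lemma tan_convex: "convex_on {0..<pi/2} tan"
proof (rule convex_on_realI[where f' = "\<lambda>x. inverse ((cos x)\<^sup>2)"])
  show "connected {0..<pi/2::real}" by simp
  fix x assume "x \<in> {0..<pi/2::real}"
  then have "cos x > 0" by (intro cos_gt_zero_pi) auto
  then show "(tan has_real_derivative inverse ((cos x)\<^sup>2)) (at x)" by simp
next
  fix x y :: real assume xy: "x \<in> {0..<pi/2}" "y \<in> {0..<pi/2}" "x \<le> y"
  have cy: "cos y > 0" using xy by (intro cos_gt_zero_pi) auto
  have "cos y \<le> cos x" using xy by (intro cos_monotone_0_pi_le) auto
  then have "(cos y)\<^sup>2 \<le> (cos x)\<^sup>2" using cy by (intro power_mono) auto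
  then show "inverse ((cos x)\<^sup>2) \<le> inverse ((cos y)\<^sup>2)"
    using cy by (intro le_imp_inverse_le) auto
qed

lemma sinh_convex: "convex_on {0..} (sinh::real\<Rightarrow>real)"
proof (rule convex_on_realI[where f' = cosh])
  show "connected {0::real..}" by simp
  fix x :: real show "(sinh has_real_derivative cosh x) (at x)" by (auto intro!: derivative_eq_intros)
next
  fix x y :: real assume "x \<in> {0..}" "y \<in> {0..}" "x \<le> y"
  then show "cosh x \<le> cosh y" by (simp add: cosh_real_nonneg_le_iff)
qed

lemma tan_slope: fixes a b :: real assumes "0 < a" "a \<le> b" "b < pi/2" shows "tan a \<le> (a/b) * tan b"
proof -
  have "tan ((1 - a/b) *\<^sub>R 0 + (a/b) *\<^sub>R b) \<le> (1 - a/b) * tan 0 + (a/b) * tan b"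
    using assms by (intro convex_onD[OF tan_convex]) (auto simp: field_simps)
  then show ?thesis using assms by simp
qed

lemma sinh_slope: fixes a b :: real assumes "0 < a" "a \<le> b" shows "sinh a \<le> (a/b) * sinh b"
proof -
  have "sinh ((1 - a/b) *\<^sub>R 0 + (a/b) *\<^sub>R b) \<le> (1 - a/b) * sinh 0 + (a/b) * sinh (b::real)"
    using assms by (intro convex_onD[OF sinh_convex]) (auto simp: field_simps)
  then show ?thesis using assms by simp
qed

lemma tan_ge: assumes "0 \<le> b" "b < pi/2" shows "b \<le> tan b"
proof -
  have "(\<lambda>x. tan x - x) 0 \<le> (\<lambda>x. tan x - x) b"
  proof (rule DERIV_nonneg_imp_increasing_open[OF assms(1)])
    fix x assume x: "0 < x" "x < b"
    have cx: "cos x > 0" using x assms by (intro cos_gt_zero_pi) auto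
    have "cos x \<le> 1" by simp
    then have "(cos x)\<^sup>2 \<le> 1" using cx by (simp add: power_le_one)
    then have "1 \<le> inverse ((cos x)\<^sup>2)" using cx by (simp add: one_le_inverse_iff)
    moreover have "DERIV (\<lambda>x. tan x - x) x :> inverse ((cos x)\<^sup>2) - 1"
      using cx by (auto intro!: derivative_eq_intros)
    ultimately show "\<exists>y. DERIV (\<lambda>x. tan x - x) x :> y \<and> y \<ge> 0" by force
  next
    show "continuous_on {0..b} (\<lambda>x. tan x - x)"
    proof (intro continuous_on_diff continuous_on_id continuous_at_imp_continuous_on ballI)
      fix x assume "x \<in> {0..b}"
      then have "cos x > 0" using assms by (intro cos_gt_zero_pi) auto
      then show "isCont tan x" by (intro isCont_tan) auto
    qed
  qed
  then show ?thesis by simp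
qed

lemma sinh_ge: assumes "0 \<le> (b::real)" shows "b \<le> sinh b"
proof -
  have "(\<lambda>x. sinh x - x) 0 \<le> (\<lambda>x. sinh x - x) b"
  proof (rule DERIV_nonneg_imp_increasing_open[OF assms(1)])
    fix x :: real assume x: "0 < x" "x < b"
    have "DERIV (\<lambda>x. sinh x - x) x :> cosh x - 1"
      by (auto intro!: derivative_eq_intros)
    moreover have "cosh x \<ge> 1" by (rule cosh_real_ge_1)
    ultimately show "\<exists>y. DERIV (\<lambda>x. sinh x - x) x :> y \<and> y \<ge> 0" by force
  qed (intro continuous_intros)
  then show ?thesis by simp
qed


lemma sinH_convex: "convex_on {..0} (\<lambda>s::real. - ln (sin (pi/2 * exp s)))"
proof (rule convex_on_realI[where f' = "\<lambda>s. - ((pi/2 * exp s) / tan (pi/2 * exp s))"])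
  show "connected {..0::real}" by simp
next
  fix s :: real assume "s \<in> {..0}"
  then have e: "0 < exp s" "exp s \<le> 1" by auto
  define w where "w = pi/2 * exp s"
  have w: "0 < w" "w \<le> pi/2" using e by (auto simp: w_def)
  have sw: "sin w > 0" using w by (intro sin_gt_zero) auto
  have "((\<lambda>s. - ln (sin (pi/2 * exp s))) has_real_derivative
          - (cos w * (pi/2 * exp s) / sin w)) (at s)"
    using sw unfolding w_def by (auto intro!: derivative_eq_intros simp: field_simps)
  moreover have "cos w * (pi/2 * exp s) / sin w = w / tan w"
    using sw by (cases "cos w = 0") (auto simp: tan_def w_def field_simps)
  ultimately show "((\<lambda>s. - ln (sin (pi/2 * exp s))) has_real_derivative
          - ((pi/2 * exp s) / tan (pi/2 * exp s))) (at s)" by (simp add: w_def)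
next
  fix x y :: real assume xy: "x \<in> {..0}" "y \<in> {..0}" "x \<le> y"
  define a where "a = pi/2 * exp x"
  define b where "b = pi/2 * exp y"
  have ab: "0 < a" "a \<le> b" "b \<le> pi/2" using xy by (auto simp: a_def b_def)
  show "- (a / tan a) \<le> - (b / tan b)"
  proof (cases "b = pi/2")
    case True
    have "tan b = 0" unfolding True by (simp add: tan_def)
    moreover have "0 \<le> tan a"
    proof (cases "a = pi/2")
      case True then show ?thesis unfolding True by (simp add: tan_def)
    next
      case False then show ?thesis using ab by (intro tan_pos_pi2_le) auto
    qed
    ultimately show ?thesis using ab by simp
  next
    case False
    then have b2: "b < pi/2" using ab by simp
    have ta: "tan a > 0" using ab b2 by (intro tan_gt_zero) auto
    have tb: "tan b > 0" using ab b2 by (intro tan_gt_zero) auto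
    have "tan a \<le> (a/b) * tan b" using ab b2 by (intro tan_slope) auto
    then have "b * tan a \<le> a * tan b" using ab by (simp add: field_simps)
    then have "b / tan b \<le> a / tan a" using ta tb by (simp add: field_simps)
    then show ?thesis by simp
  qed
qed

lemma core_sin: fixes y r :: real assumes "0 < y" "y < 1" "1 \<le> r"
  shows "sin (pi/2 * y powr r) \<le> sin (pi/2 * y) powr r"
proof -
  define s where "s = ln y"
  have s: "s < 0" using assms by (simp add: s_def)
  define H where "H = (\<lambda>s::real. ln (sin (pi/2 * exp s)))"
  have r0: "0 \<le> 1 - 1/r" "1 - 1/r \<le> 1" using assms by (auto simp: field_simps)
  have rs: "r * s \<in> {..0}" using assms s by (simp add: mult_nonneg_nonpos)
  have "- H s \<le> (1 - (1 - 1/r)) * (- H (r * s)) + (1 - 1/r) * (- H 0)"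
    using convex_onD[OF sinH_convex r0 rs, of 0] assms unfolding H_def by simp
  then have "- H s \<le> (1/r) * (- H (r * s))" using assms by (simp add: H_def)
  then have "H (r * s) \<le> r * H s" using assms by (simp add: field_simps)
  then have E: "exp (H (r * s)) \<le> exp (r * H s)" by simp
  have pos: "sin (pi/2 * exp z) > 0" if "z \<le> 0" for z
  proof -
    have "exp z \<le> 1" using that by simp
    then have "exp z < 2" by linarith
    then have "0 < pi/2 * exp z" "pi/2 * exp z < pi" by auto
    then show ?thesis by (rule sin_gt_zero)
  qed
  have eq: "exp (H (r * s)) = sin (pi/2 * exp (r * s))" unfolding H_def
    using pos[of "r * s"] rs by (intro exp_ln) auto
  have E2: "exp (r * H s) = exp (r * ln (sin (pi/2 * exp s)))" unfolding H_def by (rule refl)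
  have "sin (pi/2 * exp (r * s)) \<le> exp (r * ln (sin (pi/2 * exp s)))"
    using E eq E2 by linarith
  moreover have "sin (pi/2 * y) > 0" using assms by (intro sin_gt_zero) auto
  ultimately show ?thesis using assms by (simp add: s_def powr_def mult.commute)
qed


lemma aux_pow: fixes y r T :: real assumes "0 < y" "y \<le> T" "1 \<le> r"
  shows "y powr (r - 1) * T \<le> T powr r"
proof -
  have "y powr (r - 1) \<le> T powr (r - 1)" using assms by (intro powr_mono2) auto
  then have "y powr (r - 1) * T \<le> T powr (r - 1) * T" using assms by (intro mult_right_mono) auto
  also have "\<dots> = T powr r" using assms by (simp add: powr_diff)
  finally show ?thesis .
qed

lemma aux_ratio: fixes y r :: real assumes "0 < y" "y < 1" "1 \<le> r"
  shows "y powr r \<le> y" "0 < y powr r" "(y powr r) / y = y powr (r - 1)"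
  using assms by (auto simp: powr_diff intro: powr_le_one_le)

lemma core_tan: fixes y r :: real assumes "0 < y" "y < 1" "1 \<le> r"
  shows "tan (pi/2 * y powr r) \<le> tan (pi/2 * y) powr r"
proof -
  note R = aux_ratio[OF assms]
  have b: "0 < pi/2*y" "pi/2 * y < pi/2" using assms by auto
  have "tan (pi/2 * y powr r) \<le> ((pi/2 * y powr r)/(pi/2*y)) * tan (pi/2 * y)"
    using R b assms by (intro tan_slope) auto
  also have "(pi/2 * y powr r)/(pi/2*y) = y powr (r - 1)" using R by simp
  also have "y powr (r - 1) * tan (pi/2 * y) \<le> tan (pi/2 * y) powr r"
  proof (rule aux_pow[OF assms(1) _ assms(3)])
    have "y \<le> pi/2 * y" using assms pi_gt3 by auto
    also have "\<dots> \<le> tan (pi/2*y)" using b by (intro tan_ge) auto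
    finally show "y \<le> tan (pi/2*y)" .
  qed
  finally show ?thesis .
qed

lemma core_sinh: fixes y r :: real assumes "0 < y" "y < 1" "1 \<le> r"
  shows "sinh (y powr r) \<le> sinh y powr r"
proof -
  note R = aux_ratio[OF assms]
  have "sinh (y powr r) \<le> ((y powr r)/y) * sinh y"
    using R assms by (intro sinh_slope) auto
  also have "(y powr r)/y = y powr (r - 1)" using R by simp
  also have "y powr (r - 1) * sinh y \<le> sinh y powr r"
    using assms by (intro aux_pow sinh_ge) auto
  finally show ?thesis .
qed


lemma generic:
  fixes F :: "real \<Rightarrow> real" and x :: real
  assumes core: "\<And>y r. 0 < y \<Longrightarrow> y < 1 \<Longrightarrow> 1 \<le> r \<Longrightarrow> F (y powr r) \<le> F y powr r"
    and pos: "\<And>y. 0 < y \<Longrightarrow> y < 1 \<Longrightarrow> 0 < F y"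
    and x: "0 < x" "x < 1"
  shows "antimono_on {0<..} (\<lambda>k. F (x powr k) powr (1 / k))"
    and "\<forall>k. k \<ge> 1 \<longrightarrow> F (x powr k) powr (1 / k) \<le> F x \<and> F x \<le> F (x powr (1 / k)) powr k"
proof -
  have xp: "0 < x powr t" "x powr t < 1" if "0 < t" for t
    using x that powr_less_mono2[of t x 1] by auto
  have mono: "F (x powr k) powr (1 / k) \<le> F (x powr j) powr (1 / j)" if jk: "0 < j" "j \<le> k" for j k :: real
  proof -
    define y where "y = x powr j"
    define r where "r = k / j"
    have y: "0 < y" "y < 1" using xp[OF jk(1)] by (auto simp: y_def)
    have r: "1 \<le> r" using jk by (simp add: r_def)
    have yr: "y powr r = x powr k" using jk by (simp add: y_def r_def powr_powr)
    have k0: "0 < k" using jk by simp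
    have "F (x powr k) powr (1/k) = F (y powr r) powr (1/k)" by (simp add: yr)
    also have "\<dots> \<le> (F y powr r) powr (1/k)"
      using pos[OF xp[OF k0]] core[OF y r] k0 yr by (intro powr_mono2) auto
    also have "\<dots> = F y powr (1/j)" using jk by (simp add: powr_powr r_def)
    finally show ?thesis by (simp add: y_def)
  qed
  show "antimono_on {0<..} (\<lambda>k. F (x powr k) powr (1 / k))"
    unfolding monotone_on_def using mono by auto
  show "\<forall>k. k \<ge> 1 \<longrightarrow> F (x powr k) powr (1 / k) \<le> F x \<and> F x \<le> F (x powr (1 / k)) powr k"
  proof (intro allI impI conjI)
    fix k :: real assume k: "1 \<le> k"
    show "F (x powr k) powr (1 / k) \<le> F x"
      using mono[of 1 k] k pos[OF x] x by simp
    have y: "0 < x powr (1/k)" "x powr (1/k) < 1" using xp[of "1/k"] k by auto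
    have "(x powr (1/k)) powr k = x" using k x by (simp add: powr_powr)
    then show "F x \<le> F (x powr (1 / k)) powr k" using core[OF y k] by simp
  qed
qed


theorem lemma4p10:
  fixes x :: real
  assumes "0 < x" and "x < 1"
  shows "antimono_on {0<..} (\<lambda>k::real. sin (pi / 2 * x powr k) powr (1 / k))
       \<and> antimono_on {0<..} (\<lambda>k::real. tan (pi / 2 * x powr k) powr (1 / k))
       \<and> antimono_on {0<..} (\<lambda>k::real. sinh (x powr k) powr (1 / k))
       \<and> (\<forall>k::real. k \<ge> 1 \<longrightarrow>
            sin (pi / 2 * x powr k) powr (1 / k) \<le> sin (pi / 2 * x)
          \<and> sin (pi / 2 * x) \<le> sin (pi / 2 * x powr (1 / k)) powr k
          \<and> tan (pi / 2 * x powr k) powr (1 / k) \<le> tan (pi / 2 * x)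
          \<and> tan (pi / 2 * x) \<le> tan (pi / 2 * x powr (1 / k)) powr k
          \<and> sinh (x powr k) powr (1 / k) \<le> sinh x
          \<and> sinh x \<le> sinh (x powr (1 / k)) powr k)"
  proof -
  have ps: "0 < sin (pi / 2 * y)" if "0 < y" "y < 1" for y :: real
    using that by (intro sin_gt_zero) auto
  have pt: "0 < tan (pi / 2 * y)" if "0 < y" "y < 1" for y :: real
    using that by (intro tan_gt_zero) auto
  have ph: "0 < sinh y" if "0 < y" "y < 1" for y :: real
    using that by simp
  note S = generic[where F = "\<lambda>y. sin (pi / 2 * y)", OF core_sin ps assms]
  note T = generic[where F = "\<lambda>y. tan (pi / 2 * y)", OF core_tan pt assms]
  note Hh = generic[where F = "sinh", OF core_sinh ph assms]
  show ?thesis using S T Hh by blast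
qed

end
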